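(* The set $\mathcal{P}^{(+)}$ is path-connected.
   Context: Consider the continuous-time LTI system $\dot x = Ax + B_u u + B_d d$, $y = Cx + Dd$, with $x\in\mathbb{R}^n$, $u\in\mathbb{R}^m$, $d,y\in\mathbb{R}^p$ and real matrices of compatible dimensions. For $K\in\mathbb{R}^{m\times n}$ write $A_K = A-B_uK$. For a symmetric $P\in\mathbb{R}^{n\times n}$ let $$M_K(P)=\begin{bmatrix} A_K^\top P + PA_K & PB_d - C^\top\\ B_d^\top P - C & -D-D^\top\end{bmatrix}.$$ The condition $L_{\mathrm{s}}(D,K)$ (resp. $L_{\mathrm{ns}}(D,K)$) on $P$ means: if $D=0$, $A_K^\top P + PA_K\prec 0$ (resp. $\preceq 0$) and $B_d^\top P = C$; if $D\neq 0$, $M_K(P)\prec 0$ (resp. $\preceq 0$). The passivity region is $\mathcal{P}=\{K\in\mathbb{R}^{m\times n}:\exists P\succ 0 \text{ with } L_{\mathrm{ns}}(D,K)\}$ and the strict passivity region is $\mathcal{P}^+=\{K\in\mathbb{R}^{m\times n}:\exists P\succ 0\text{ with } L_{\mathrm{s}}(D,K)\}$. The notation $\mathcal{P}^{(+)}$ stands for either $\mathcal{P}$ or $\mathcal{P}^+$; the statement holds in both cases. (Standing assumption in the paper: $\mathcal{P}^{(+)}\neq\emptyset$.) *)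

theory Defs
  imports "HOL-Analysis.Analysis"
begin

text \<open>Matrices are rendered as nested Cartesian vectors: a k-by-l real matrix is
  real^'l^'k (rows indexed by 'k). Dimensions n, m, p are the finite index types
  'n, 'm, 'p.\<close>

definition pos_def :: "real^'k^'k \<Rightarrow> bool" where
  "pos_def M \<longleftrightarrow> transpose M = M \<and> (\<forall>x. x \<noteq> 0 \<longrightarrow> x \<bullet> (M *v x) > 0)"

definition neg_def :: "real^'k^'k \<Rightarrow> bool" where
  "neg_def M \<longleftrightarrow> transpose M = M \<and> (\<forall>x. x \<noteq> 0 \<longrightarrow> x \<bullet> (M *v x) < 0)"

definition neg_semidef :: "real^'k^'k \<Rightarrow> bool" where
  "neg_semidef M \<longleftrightarrow> transpose M = M \<and> (\<forall>x. x \<bullet> (M *v x) \<le> 0)"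

definition AK :: "real^'n^'n \<Rightarrow> real^'m^'n \<Rightarrow> real^'n^'m \<Rightarrow> real^'n^'n" where
  "AK A Bu K = A - Bu ** K"

definition MK :: "real^'n^'n \<Rightarrow> real^'m^'n \<Rightarrow> real^'p^'n \<Rightarrow> real^'n^'p \<Rightarrow> real^'p^'p
    \<Rightarrow> real^'n^'m \<Rightarrow> real^'n^'n \<Rightarrow> real^('n + 'p)^('n + 'p)" where
  "MK A Bu Bd C D K P = (\<chi> i j.
     (case i of
        Inl a \<Rightarrow> (case j of
                    Inl b \<Rightarrow> (transpose (AK A Bu K) ** P + P ** AK A Bu K) $ a $ b
                  | Inr b \<Rightarrow> (P ** Bd - transpose C) $ a $ b)
      | Inr a \<Rightarrow> (case j of
                    Inl b \<Rightarrow> (transpose Bd ** P - C) $ a $ b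
                  | Inr b \<Rightarrow> (- D - transpose D) $ a $ b)))"

definition L_s where
  "L_s A Bu Bd C D K P \<longleftrightarrow>
     (if D = 0 then neg_def (transpose (AK A Bu K) ** P + P ** AK A Bu K) \<and> transpose Bd ** P = C
      else neg_def (MK A Bu Bd C D K P))"

definition L_ns where
  "L_ns A Bu Bd C D K P \<longleftrightarrow>
     (if D = 0 then neg_semidef (transpose (AK A Bu K) ** P + P ** AK A Bu K) \<and> transpose Bd ** P = C
      else neg_semidef (MK A Bu Bd C D K P))"

definition passivity_region ::
  "real^'n^'n \<Rightarrow> real^'m^'n \<Rightarrow> real^'p^'n \<Rightarrow> real^'n^'p \<Rightarrow> real^'p^'p \<Rightarrow> (real^'n^'m) set" where
  "passivity_region A Bu Bd C D = {K. \<exists>P. pos_def P \<and> L_ns A Bu Bd C D K P}"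

definition strict_passivity_region ::
  "real^'n^'n \<Rightarrow> real^'m^'n \<Rightarrow> real^'p^'n \<Rightarrow> real^'n^'p \<Rightarrow> real^'p^'p \<Rightarrow> (real^'n^'m) set" where
  "strict_passivity_region A Bu Bd C D = {K. \<exists>P. pos_def P \<and> L_s A Bu Bd C D K P}"

end

theory Submission
  imports Defs
begin


lemma inner_transpose_mv:
  fixes M :: "real^'a^'b"
  shows "x \<bullet> (M *v y) = (transpose M *v x) \<bullet> y"
  by (metis dot_lmul_matrix transpose_matrix_vector)

lemma block_quad:
  fixes G :: "real^'n::finite^'n" and H :: "real^'p::finite^'n" and J :: "real^'n^'p" and E :: "real^'p^'p"
    and x :: "real^('n+'p)"
  shows "x \<bullet> ((\<chi> i j. case i of Inl a \<Rightarrow> (case j of Inl b \<Rightarrow> G$a$b | Inr b \<Rightarrow> H$a$b)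
                      | Inr a \<Rightarrow> (case j of Inl b \<Rightarrow> J$a$b | Inr b \<Rightarrow> E$a$b)) *v x)
    = (\<chi> a. x$Inl a) \<bullet> (G *v (\<chi> a. x$Inl a)) + (\<chi> a. x$Inl a) \<bullet> (H *v (\<chi> b. x$Inr b))
      + (\<chi> b. x$Inr b) \<bullet> (J *v (\<chi> a. x$Inl a)) + (\<chi> b. x$Inr b) \<bullet> (E *v (\<chi> b. x$Inr b))"
  by (simp add: inner_vec_def matrix_vector_mult_def UNIV_Plus_UNIV[symmetric] sum.Plus
       sum.distrib distrib_left distrib_right algebra_simps del: UNIV_Plus_UNIV)

lemma det_cont: "continuous_on S (\<lambda>A::real^'n::finite^'n. det A)"
  unfolding det_def by (intro continuous_intros)



lemma matrix_inv_unique: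
  fixes A B :: "real^'n::finite^'n"
  assumes "A ** B = mat 1" "B ** A = mat 1"
  shows "matrix_inv A = B"
proof -
  have ex: "\<exists>B'. A ** B' = mat 1 \<and> B' ** A = mat 1" using assms by blast
  have h: "A ** matrix_inv A = mat 1 \<and> matrix_inv A ** A = mat 1"
    unfolding matrix_inv_def by (rule someI_ex[OF ex])
  have "matrix_inv A = matrix_inv A ** (A ** B)" using assms by simp
  also have "\<dots> = (matrix_inv A ** A) ** B" by (simp add: matrix_mul_assoc)
  also have "\<dots> = B" using h by simp
  finally show ?thesis .
qed

lemma matrix_inv_works:
  fixes A :: "real^'n::finite^'n"
  assumes "det A \<noteq> 0"
  shows "A ** matrix_inv A = mat 1 \<and> matrix_inv A ** A = mat 1"
proof -
  have ex: "\<exists>B'. A ** B' = mat 1 \<and> B' ** A = mat 1" using assms invertible_det_nz invertible_def by blast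
  show ?thesis unfolding matrix_inv_def by (rule someI_ex[OF ex])
qed

lemma matrix_inv_entry:
  fixes Q :: "real^'n::finite^'n"
  assumes "det Q \<noteq> 0"
  shows "matrix_inv Q $ k $ j = det (\<chi> a b. if b = k then axis j 1 $ a else Q$a$b) / det Q"
proof -
  have "Q *v (matrix_inv Q *v axis j 1) = axis j 1"
    using matrix_inv_works[OF assms] by (simp add: matrix_vector_mul_assoc)
  then have "matrix_inv Q *v axis j 1 = (\<chi> k. det(\<chi> i l. if l=k then axis j 1 $i else Q$i$l) / det Q)"
    using cramer[OF assms] by blast
  then have "(matrix_inv Q *v axis j 1) $ k = det (\<chi> a b. if b = k then axis j 1 $ a else Q$a$b) / det Q"
    by simp
  moreover have "(matrix_inv Q *v axis j 1) $ k = matrix_inv Q $ k $ j"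
    by (simp add: matrix_vector_mult_def axis_def if_distrib cong: if_cong)
  ultimately show ?thesis by simp
qed

lemma cont_inv_mult:
  fixes S :: "((real^'n::finite^'n) \<times> (real^'n^'m::finite)) set"
  assumes "\<And>z. z \<in> S \<Longrightarrow> det (fst z) \<noteq> 0"
  shows "continuous_on S (\<lambda>z. snd z ** matrix_inv (fst z))"
proof -
  have c: "continuous_on S (\<lambda>z. matrix_inv (fst z) $ k $ j)" for k j
  proof -
    have "continuous_on S (\<lambda>z. det (\<chi> a b. if b = k then axis j 1 $ a else fst z$a$b) / det (fst z))"
      using assms unfolding det_def
      apply (intro continuous_intros)
       apply (auto simp: det_def)
      apply (case_tac "b = k")
       apply (auto intro!: continuous_intros)
      done
    then show ?thesis
      by (rule continuous_on_cong[THEN iffD1, rotated 2]) (auto simp: matrix_inv_entry assms)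
  qed
  show ?thesis
    unfolding matrix_matrix_mult_def
    by (intro continuous_intros c)
qed



definition sok :: "bool \<Rightarrow> real \<Rightarrow> bool" where
  "sok s r \<longleftrightarrow> (if s then r < 0 else r \<le> 0)"

definition nd :: "bool \<Rightarrow> real^'k^'k \<Rightarrow> bool" where
  "nd s M \<longleftrightarrow> transpose M = M \<and> (\<forall>x. x \<noteq> 0 \<longrightarrow> sok s (x \<bullet> (M *v x)))"

lemma neg_def_nd: "neg_def M = nd True M"
  by (simp add: neg_def_def nd_def sok_def)

lemma neg_semidef_nd: "neg_semidef M = nd False M"
  unfolding neg_semidef_def nd_def sok_def by (metis inner_zero_left order_refl)

definition Lgen where
  "Lgen s A Bu Bd C D K P \<longleftrightarrow>
     (if D = 0 then nd s (transpose (AK A Bu K) ** P + P ** AK A Bu K) \<and> transpose Bd ** P = C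
      else nd s (MK A Bu Bd C D K P))"

lemma L_s_gen: "L_s A Bu Bd C D K P = Lgen True A Bu Bd C D K P"
  by (simp add: L_s_def Lgen_def neg_def_nd)
lemma L_ns_gen: "L_ns A Bu Bd C D K P = Lgen False A Bu Bd C D K P"
  by (simp add: L_ns_def Lgen_def neg_semidef_nd)

definition phi0 where
  "phi0 A Bu Q L w = (A *v (Q *v w) - Bu *v (L *v w)) \<bullet> w"

definition Phi where
  "Phi A Bu Bd C D Q L w v = phi0 A Bu Q L w + w \<bullet> (Bd *v v) - (C *v (Q *v w)) \<bullet> v - v \<bullet> (D *v v)"

definition R where
  "R s A Bu Bd C D Q L \<longleftrightarrow>
    (if D = 0 then (\<forall>w. w \<noteq> 0 \<longrightarrow> sok s (phi0 A Bu Q L w)) \<and> transpose Bd = C ** Q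
     else (\<forall>w v. (w \<noteq> 0 \<or> v \<noteq> 0) \<longrightarrow> sok s (Phi A Bu Bd C D Q L w v)))"

lemma inner_vmul:
  fixes M :: "real^'a::finite^'b::finite"
  shows "x \<bullet> (y v* M) = (M *v x) \<bullet> y"
  by (metis inner_transpose_mv transpose_matrix_vector transpose_transpose)

lemma neg_mv: "(- D) *v v = - (D *v (v::real^'a::finite))"
  by (simp add: matrix_vector_mult_def vec_eq_iff sum_negf)

lemma sok2: "sok s (2 * r) = sok s r"
  by (simp add: sok_def)

lemma quad_G:
  fixes P :: "real^'n::finite^'n" and M :: "real^'n^'n"
  assumes "transpose P = P"
  shows "u \<bullet> ((transpose M ** P + P ** M) *v u) = 2 * ((M *v u) \<bullet> (P *v u))"
proof -
  have "u \<bullet> ((transpose M ** P + P ** M) *v u) = u \<bullet> (transpose M *v (P *v u)) + u \<bullet> (P *v (M *v u))"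
    by (simp add: matrix_vector_mult_add_rdistrib matrix_vector_mul_assoc inner_add_right)
  also have "\<dots> = (M *v u) \<bullet> (P *v u) + (P *v u) \<bullet> (M *v u)"
    using assms by (simp add: inner_vmul inner_transpose_mv[of u P])
  finally show ?thesis by (simp add: inner_commute)
qed

lemma quad_MK:
  fixes P :: "real^'n::finite^'n"
  assumes "transpose P = P"
  shows "x \<bullet> (MK A Bu Bd C D K P *v x)
     = 2 * ((AK A Bu K *v (\<chi> a. x$Inl a)) \<bullet> (P *v (\<chi> a. x$Inl a))
        + (P *v (\<chi> a. x$Inl a)) \<bullet> (Bd *v (\<chi> b. x$Inr b))
        - (C *v (\<chi> a. x$Inl a)) \<bullet> (\<chi> b. x$Inr b)
        - (\<chi> b. x$Inr b) \<bullet> (D *v (\<chi> b. x$Inr b)))"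
proof -
  define u where "u = (\<chi> a. x$Inl a)"
  define v where "v = (\<chi> b. x$Inr b)"
  have "x \<bullet> (MK A Bu Bd C D K P *v x) =
     u \<bullet> ((transpose (AK A Bu K) ** P + P ** AK A Bu K) *v u) + u \<bullet> ((P ** Bd - transpose C) *v v)
      + v \<bullet> ((transpose Bd ** P - C) *v u) + v \<bullet> ((- D - transpose D) *v v)"
    unfolding MK_def u_def v_def by (rule block_quad)
  also have "u \<bullet> ((transpose (AK A Bu K) ** P + P ** AK A Bu K) *v u) = 2 * ((AK A Bu K *v u) \<bullet> (P *v u))"
    by (rule quad_G[OF assms])
  also have "u \<bullet> ((P ** Bd - transpose C) *v v) = (P *v u) \<bullet> (Bd *v v) - (C *v u) \<bullet> v"
    using assms
    by (simp add: matrix_vector_mult_diff_rdistrib matrix_vector_mul_assoc[symmetric] inner_diff_right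
        inner_transpose_mv[of u P] inner_vmul)
  also have "v \<bullet> ((transpose Bd ** P - C) *v u) = (P *v u) \<bullet> (Bd *v v) - (C *v u) \<bullet> v"
    by (simp add: matrix_vector_mult_diff_rdistrib matrix_vector_mul_assoc[symmetric] inner_diff_right
        inner_vmul inner_commute)
  also have "v \<bullet> ((- D - transpose D) *v v) = - 2 * (v \<bullet> (D *v v))"
    using neg_mv[of D v] inner_vmul[of v v D] inner_commute[of "D *v v" v] by (simp add: matrix_vector_mult_diff_rdistrib inner_diff_right inner_transpose_mv[of v "transpose D"]
        inner_commute)
  finally show ?thesis unfolding u_def v_def by (simp add: algebra_simps)
qed


lemma sym_G:
  fixes P M :: "real^'n::finite^'n"
  assumes "transpose P = P"
  shows "transpose (transpose M ** P + P ** M) = transpose M ** P + P ** M"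
proof -
  have "transpose (X + Y) = transpose X + transpose Y" for X Y :: "real^'n^'n"
    by (simp add: transpose_def vec_eq_iff)
  then show ?thesis using assms by (simp add: matrix_transpose_mul add.commute)
qed

lemma vec_eqI': "(\<And>i. x$i = y$i) \<Longrightarrow> x = y"
  by (simp add: vec_eq_iff)

lemma tr_entry: "transpose M = M \<Longrightarrow> M $ b $ a = M $ a $ b"
  by (metis transpose_def vec_lambda_beta)

lemma tr_apply: "transpose M $ i $ j = M $ j $ i"
  by (simp add: transpose_def)

lemma vec_sum_zero:
  fixes x :: "real^('n::finite+'p::finite)"
  shows "x = 0 \<longleftrightarrow> (\<chi> a. x$Inl a) = 0 \<and> (\<chi> b. x$Inr b) = 0"
proof
  assume "x = 0" then show "(\<chi> a. x$Inl a) = 0 \<and> (\<chi> b. x$Inr b) = 0" by (simp add: vec_eq_iff)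
next
  assume h: "(\<chi> a. x$Inl a) = 0 \<and> (\<chi> b. x$Inr b) = 0"
  show "x = 0"
  proof (rule vec_eqI')
    fix i show "x$i = 0$i"
    proof (cases i)
      case (Inl a) then show ?thesis using h by (metis vec_lambda_beta zero_index)
    next
      case (Inr b) then show ?thesis using h by (metis vec_lambda_beta zero_index)
    qed
  qed
qed

lemma sym_MK:
  fixes P :: "real^'n::finite^'n"
  assumes "transpose P = P"
  shows "transpose (MK A Bu Bd C D K P) = MK A Bu Bd C D K P"
proof -
  have g: "transpose (transpose (AK A Bu K) ** P + P ** AK A Bu K) = transpose (AK A Bu K) ** P + P ** AK A Bu K"
    by (rule sym_G[OF assms])
  have td: "transpose (X - Y) = transpose X - transpose Y" for X Y :: "real^'p^'n"
    by (simp add: transpose_def vec_eq_iff)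
  have h: "transpose (P ** Bd - transpose C) = transpose Bd ** P - C"
    using assms by (simp add: td matrix_transpose_mul)
  have g': "(transpose (AK A Bu K) ** P + P ** AK A Bu K) $ b $ a = (transpose (AK A Bu K) ** P + P ** AK A Bu K) $ a $ b" for a b
    using g by (rule tr_entry)
  have h': "(P ** Bd - transpose C) $ b $ a = (transpose Bd ** P - C) $ a $ b" for a b
  proof -
    have "transpose (P ** Bd - transpose C) $ a $ b = (transpose Bd ** P - C) $ a $ b" using h by simp
    then show ?thesis by (simp add: transpose_def)
  qed
  have e': "(- D - transpose D) $ b $ a = (- D - transpose D) $ a $ b" for a b
    by (simp add: transpose_def)
  show ?thesis
    unfolding MK_def
  proof (rule vec_eqI', rule vec_eqI')
    fix i j
    show "transpose (\<chi> i j. case i of Inl a \<Rightarrow> (case j of Inl b \<Rightarrow> (transpose (AK A Bu K) ** P + P ** AK A Bu K) $ a $ b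
                  | Inr b \<Rightarrow> (P ** Bd - transpose C) $ a $ b)
      | Inr a \<Rightarrow> (case j of Inl b \<Rightarrow> (transpose Bd ** P - C) $ a $ b
                  | Inr b \<Rightarrow> (- D - transpose D) $ a $ b)) $ i $ j = 
          (\<chi> i j. case i of Inl a \<Rightarrow> (case j of Inl b \<Rightarrow> (transpose (AK A Bu K) ** P + P ** AK A Bu K) $ a $ b
                  | Inr b \<Rightarrow> (P ** Bd - transpose C) $ a $ b)
      | Inr a \<Rightarrow> (case j of Inl b \<Rightarrow> (transpose Bd ** P - C) $ a $ b
                  | Inr b \<Rightarrow> (- D - transpose D) $ a $ b)) $ i $ j"
      unfolding tr_apply vec_lambda_beta
      by (cases i; cases j) (simp_all only: sum.case g' h' e')
  qed
qed
lemma transfer_PQ: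
  fixes P Q :: "real^'n::finite^'n" and K :: "real^'n^'m::finite" and Bd :: "real^'p::finite^'n"
  assumes PQ: "P ** Q = mat 1" and QP: "Q ** P = mat 1" and sP: "transpose P = P" and sQ: "transpose Q = Q"
    and L: "L = K ** Q"
  shows "Lgen s A Bu Bd C D K P \<longleftrightarrow> R s A Bu Bd C D Q L"
proof -
  have PQw: "P *v (Q *v w) = w" for w using PQ by (simp add: matrix_vector_mul_assoc)
  have QPu: "Q *v (P *v u) = u" for u using QP by (simp add: matrix_vector_mul_assoc)
  have key0: "(AK A Bu K *v (Q *v w)) \<bullet> (P *v (Q *v w)) = phi0 A Bu Q L w" for w
    unfolding phi0_def AK_def PQw L
    by (simp add: matrix_vector_mult_diff_rdistrib matrix_vector_mul_assoc[symmetric])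
  have allT: "(\<forall>u. u \<noteq> 0 \<longrightarrow> F u) \<longleftrightarrow> (\<forall>w. w \<noteq> 0 \<longrightarrow> F (Q *v w))" for F
    by (metis PQw QPu matrix_vector_mult_0_right)
  have Gpart: "nd s (transpose (AK A Bu K) ** P + P ** AK A Bu K) \<longleftrightarrow> (\<forall>w. w \<noteq> 0 \<longrightarrow> sok s (phi0 A Bu Q L w))"
    unfolding nd_def quad_G[OF sP] sok2
    by (subst allT) (simp add: key0 sym_G[OF sP])
  have Bpart: "transpose Bd ** P = C \<longleftrightarrow> transpose Bd = C ** Q"
    by (metis PQ QP matrix_mul_assoc matrix_mul_rid)
  have Mpart: "nd s (MK A Bu Bd C D K P) \<longleftrightarrow> (\<forall>w v. (w \<noteq> 0 \<or> v \<noteq> 0) \<longrightarrow> sok s (Phi A Bu Bd C D Q L w v))"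
  proof -
    have q: "x \<bullet> (MK A Bu Bd C D K P *v x) = 2 * Phi A Bu Bd C D Q L (P *v (\<chi> a. x$Inl a)) (\<chi> b. x$Inr b)" for x
      unfolding quad_MK[OF sP] Phi_def key0[symmetric] QPu PQw
      by (simp add: inner_commute)
    show ?thesis
    proof
      assume h: "nd s (MK A Bu Bd C D K P)"
      show "\<forall>w v. (w \<noteq> 0 \<or> v \<noteq> 0) \<longrightarrow> sok s (Phi A Bu Bd C D Q L w v)"
      proof (intro allI impI)
        fix w :: "real^'n" and v :: "real^'p" assume wv: "w \<noteq> 0 \<or> v \<noteq> 0"
        define x :: "real^('n+'p)" where "x = (\<chi> i. case i of Inl a \<Rightarrow> (Q *v w)$a | Inr b \<Rightarrow> v$b)"
        have xu: "(\<chi> a. x$Inl a) = Q *v w" and xv: "(\<chi> b. x$Inr b) = v"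
          unfolding x_def by (simp_all add: vec_eq_iff)
        have "x \<noteq> 0" using wv unfolding vec_sum_zero xu xv by (metis PQw matrix_vector_mult_0_right)
        then have "sok s (x \<bullet> (MK A Bu Bd C D K P *v x))" using h unfolding nd_def by blast
        then show "sok s (Phi A Bu Bd C D Q L w v)" unfolding q xu xv PQw sok2 .
      qed
    next
      assume h: "\<forall>w v. (w \<noteq> 0 \<or> v \<noteq> 0) \<longrightarrow> sok s (Phi A Bu Bd C D Q L w v)"
      show "nd s (MK A Bu Bd C D K P)"
        unfolding nd_def
      proof (intro conjI sym_MK[OF sP] allI impI)
        fix x :: "real^('n+'p)" assume "x \<noteq> 0"
        then have "P *v (\<chi> a. x$Inl a) \<noteq> 0 \<or> (\<chi> b. x$Inr b) \<noteq> 0"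
          unfolding vec_sum_zero by (metis QPu matrix_vector_mult_0_right)
        then show "sok s (x \<bullet> (MK A Bu Bd C D K P *v x))" using h unfolding q sok2 by blast
      qed
    qed
  qed
  show ?thesis unfolding Lgen_def R_def using Gpart Bpart Mpart by simp
qed



lemma scaleR_mv: "(c *\<^sub>R M) *v (w::real^'a::finite) = c *\<^sub>R (M *v w)"
  by (simp add: matrix_vector_mult_def vec_eq_iff sum_distrib_left algebra_simps)

lemma comb_mv: "(a *\<^sub>R M + b *\<^sub>R N) *v (w::real^'a::finite) = a *\<^sub>R (M *v w) + b *\<^sub>R (N *v w)"
  by (simp add: matrix_vector_mult_add_rdistrib scaleR_mv)

lemma pos_def_det:
  fixes P :: "real^'n::finite^'n"
  assumes "pos_def P" shows "det P \<noteq> 0"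
proof -
  have "\<forall>x. P *v x = 0 \<longrightarrow> x = 0"
    using assms unfolding pos_def_def by (metis inner_zero_right less_irrefl)
  then have "\<exists>B. B ** P = mat 1" using matrix_left_invertible_ker by blast
  then show ?thesis using invertible_left_inverse invertible_det_nz by blast
qed

lemma inv_pos_def:
  fixes P Q :: "real^'n::finite^'n"
  assumes P: "pos_def P" and PQ: "P ** Q = mat 1" and QP: "Q ** P = mat 1"
  shows "pos_def Q"
proof -
  have sP: "transpose P = P" using P pos_def_def by blast
  have "transpose Q ** P = mat 1"
    using PQ sP by (metis matrix_transpose_mul transpose_mat)
  then have sQ: "transpose Q = Q"
    by (metis PQ matrix_mul_assoc matrix_mul_lid matrix_mul_rid)
  have PQw: "P *v (Q *v w) = w" for w using PQ by (simp add: matrix_vector_mul_assoc)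
  have "w \<bullet> (Q *v w) > 0" if "w \<noteq> 0" for w
  proof -
    define z where "z = Q *v w"
    have "z \<noteq> 0" using that PQw z_def by (metis matrix_vector_mult_0_right)
    then have "z \<bullet> (P *v z) > 0" using P pos_def_def by blast
    moreover have "w = P *v z" using PQw z_def by simp
    ultimately show ?thesis unfolding z_def by (simp add: inner_commute)
  qed
  then show ?thesis using sQ pos_def_def by blast
qed

lemma sym_of_pos: "pos_def P \<Longrightarrow> transpose P = P" by (simp add: pos_def_def)

definition SS where
  "SS s A Bu Bd C D = {z. pos_def (fst z) \<and> R s A Bu Bd C D (fst z) (snd z)}"

lemma region_eq:
  fixes A :: "real^'n::finite^'n" and Bu :: "real^'m::finite^'n" and Bd :: "real^'p::finite^'n"
    and C :: "real^'n^'p" and D :: "real^'p^'p"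
  shows "{K. \<exists>P. pos_def P \<and> Lgen s A Bu Bd C D K P} = (\<lambda>z. snd z ** matrix_inv (fst z)) ` SS s A Bu Bd C D"
proof (rule set_eqI, rule iffI)
  fix K assume "K \<in> {K. \<exists>P. pos_def P \<and> Lgen s A Bu Bd C D K P}"
  then obtain P where P: "pos_def P" and LP: "Lgen s A Bu Bd C D K P" by blast
  define Q where "Q = matrix_inv P"
  have PQ: "P ** Q = mat 1" and QP: "Q ** P = mat 1" using matrix_inv_works[OF pos_def_det[OF P]] Q_def by auto
  have Q: "pos_def Q" by (rule inv_pos_def[OF P PQ QP])
  have iQ: "matrix_inv Q = P" by (rule matrix_inv_unique[OF QP PQ])
  have "R s A Bu Bd C D Q (K ** Q)"
    using transfer_PQ[OF PQ QP sym_of_pos[OF P] sym_of_pos[OF Q] refl] LP by blast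
  then have "(Q, K ** Q) \<in> SS s A Bu Bd C D" using Q by (simp add: SS_def)
  moreover have "K = snd (Q, K ** Q) ** matrix_inv (fst (Q, K ** Q))"
    by (simp add: iQ matrix_mul_assoc[symmetric] QP)
  ultimately show "K \<in> (\<lambda>z. snd z ** matrix_inv (fst z)) ` SS s A Bu Bd C D" by blast
next
  fix K assume "K \<in> (\<lambda>z. snd z ** matrix_inv (fst z)) ` SS s A Bu Bd C D"
  then obtain Q L where z: "(Q, L) \<in> SS s A Bu Bd C D" and K: "K = L ** matrix_inv Q" by auto
  have Q: "pos_def Q" and RQ: "R s A Bu Bd C D Q L" using z by (auto simp: SS_def)
  define P where "P = matrix_inv Q"
  have QP: "Q ** P = mat 1" and PQ: "P ** Q = mat 1" using matrix_inv_works[OF pos_def_det[OF Q]] P_def by auto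
  have P: "pos_def P" by (rule inv_pos_def[OF Q QP PQ])
  have L: "L = K ** Q" by (simp add: K P_def[symmetric] matrix_mul_assoc[symmetric] PQ)
  have "Lgen s A Bu Bd C D K P"
    using transfer_PQ[OF PQ QP sym_of_pos[OF P] sym_of_pos[OF Q] L] RQ by blast
  then show "K \<in> {K. \<exists>P. pos_def P \<and> Lgen s A Bu Bd C D K P}" using P by blast
qed



lemma mv_scaleR: "M *v (c *\<^sub>R w) = c *\<^sub>R (M *v (w::real^'a::finite))"
  by (simp add: matrix_vector_mult_def vec_eq_iff sum_distrib_left algebra_simps)

lemma mm_scaleR: "C ** (c *\<^sub>R Q) = c *\<^sub>R (C ** (Q::real^'a::finite^'b::finite))"
  by (simp add: matrix_matrix_mult_def vec_eq_iff sum_distrib_left algebra_simps)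

lemma sok_comb:
  assumes "sok s a" "sok s b" "0 \<le> u" "0 \<le> v" "u + v = 1"
  shows "sok s (u * a + v * b)"
proof (cases s)
  case True
  then have a: "a < 0" and b: "b < 0" using assms by (auto simp: sok_def)
  show ?thesis
  proof (cases "u > 0")
    case True
    then have "u * a < 0" using a by (simp add: mult_pos_neg)
    moreover have "v * b \<le> 0" using b assms by (simp add: mult_nonneg_nonpos)
    ultimately show ?thesis using \<open>s\<close> by (simp add: sok_def)
  next
    case False
    then have "u = 0" "v = 1" using assms by auto
    then show ?thesis using \<open>s\<close> b by (simp add: sok_def)
  qed
next
  case False
  then have a: "a \<le> 0" and b: "b \<le> 0" using assms by (auto simp: sok_def)
  have "u * a \<le> 0" "v * b \<le> 0" using a b assms by (simp_all add: mult_nonneg_nonpos)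
  then show ?thesis using False by (simp add: sok_def)
qed

lemma phi0_comb:
  fixes A :: "real^'n::finite^'n" and Bu :: "real^'m::finite^'n" and Bd :: "real^'p::finite^'n"
    and C :: "real^'n^'p" and D :: "real^'p^'p"
  shows   "phi0 A Bu (u *\<^sub>R Q1 + v *\<^sub>R Q2) (u *\<^sub>R L1 + v *\<^sub>R L2) w = u * phi0 A Bu Q1 L1 w + v * phi0 A Bu Q2 L2 w"
  unfolding phi0_def comb_mv
  by (simp add: matrix_vector_right_distrib matrix_vector_mult_diff_distrib mv_scaleR scaleR_mv
      inner_add_left inner_diff_left algebra_simps)

lemma Phi_comb:
  fixes A :: "real^'n::finite^'n" and Bu :: "real^'m::finite^'n" and Bd :: "real^'p::finite^'n"
    and C :: "real^'n^'p" and D :: "real^'p^'p"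
  assumes "u + v = 1"
  shows "Phi A Bu Bd C D (u *\<^sub>R Q1 + v *\<^sub>R Q2) (u *\<^sub>R L1 + v *\<^sub>R L2) w x
     = u * Phi A Bu Bd C D Q1 L1 w x + v * Phi A Bu Bd C D Q2 L2 w x"
proof -
  have e: "t = u * t + v * t" for t :: real using assms by (metis distrib_right mult_1)
  show ?thesis
    unfolding Phi_def phi0_comb comb_mv
    apply (subst e[of "w \<bullet> (Bd *v x)"], subst e[of "x \<bullet> (D *v x)"])
    by (simp add: matrix_vector_right_distrib mv_scaleR scaleR_mv
      inner_add_left inner_diff_left algebra_simps)
qed

lemma pos_def_comb:
  assumes "pos_def P1" "pos_def P2" "0 \<le> u" "0 \<le> v" "u + v = 1"
  shows "pos_def (u *\<^sub>R P1 + v *\<^sub>R (P2::real^'n::finite^'n))"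
proof -
  have t: "transpose (u *\<^sub>R P1 + v *\<^sub>R P2) = u *\<^sub>R transpose P1 + v *\<^sub>R transpose P2"
    by (simp add: transpose_def vec_eq_iff)
  have "x \<bullet> ((u *\<^sub>R P1 + v *\<^sub>R P2) *v x) > 0" if "x \<noteq> 0" for x
  proof -
    have a: "x \<bullet> (P1 *v x) > 0" and b: "x \<bullet> (P2 *v x) > 0" using assms that pos_def_def by blast+
    have "x \<bullet> ((u *\<^sub>R P1 + v *\<^sub>R P2) *v x) = u * (x \<bullet> (P1 *v x)) + v * (x \<bullet> (P2 *v x))"
      by (simp add: comb_mv inner_add_right)
    also have "\<dots> > 0"
    proof (cases "u > 0")
      case True then show ?thesis using a b assms by (simp add: add_pos_nonneg)
    next
      case False then have "v = 1" "u = 0" using assms by auto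
      then show ?thesis using b by simp
    qed
    finally show ?thesis .
  qed
  then show ?thesis using assms t unfolding pos_def_def by simp
qed

lemma convex_SS: "convex (SS s A Bu Bd C D)"
proof (rule convexI)
  fix z1 z2 and u v :: real
  assume z1: "z1 \<in> SS s A Bu Bd C D" and z2: "z2 \<in> SS s A Bu Bd C D" and u0: "0 \<le> u" and v0: "0 \<le> v" and uv1: "u + v = 1"
  have uv: "0 \<le> u \<and> 0 \<le> v \<and> u + v = 1" using u0 v0 uv1 by simp
  obtain Q1 L1 where [simp]: "z1 = (Q1, L1)" by force
  obtain Q2 L2 where [simp]: "z2 = (Q2, L2)" by force
  have p1: "pos_def Q1" and r1: "R s A Bu Bd C D Q1 L1" using z1 by (auto simp: SS_def)
  have p2: "pos_def Q2" and r2: "R s A Bu Bd C D Q2 L2" using z2 by (auto simp: SS_def)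
  have pc: "pos_def (u *\<^sub>R Q1 + v *\<^sub>R Q2)" using pos_def_comb p1 p2 uv by blast
  have rc: "R s A Bu Bd C D (u *\<^sub>R Q1 + v *\<^sub>R Q2) (u *\<^sub>R L1 + v *\<^sub>R L2)"
  proof (cases "D = 0")
    case True
    have "transpose Bd = C ** (u *\<^sub>R Q1 + v *\<^sub>R Q2)"
    proof -
      have "C ** (u *\<^sub>R Q1 + v *\<^sub>R Q2) = u *\<^sub>R (C ** Q1) + v *\<^sub>R (C ** Q2)"
        by (simp add: matrix_add_ldistrib mm_scaleR)
      also have "\<dots> = (u + v) *\<^sub>R transpose Bd" using r1 r2 True by (simp add: R_def scaleR_add_left)
      finally show ?thesis using uv by simp
    qed
    then show ?thesis using r1 r2 True uv unfolding R_def
      by (auto simp: phi0_comb intro!: sok_comb)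
  next
    case False
    then show ?thesis using r1 r2 uv unfolding R_def
      by (auto simp: Phi_comb intro!: sok_comb)
  qed
  show "u *\<^sub>R z1 + v *\<^sub>R z2 \<in> SS s A Bu Bd C D"
    using pc rc by (simp add: SS_def)
qed

lemma main_gen:
  fixes A :: "real^'n::finite^'n" and Bu :: "real^'m::finite^'n" and Bd :: "real^'p::finite^'n"
    and C :: "real^'n^'p" and D :: "real^'p^'p"
  shows "path_connected {K. \<exists>P. pos_def P \<and> Lgen s A Bu Bd C D K P}"
  unfolding region_eq
proof (rule path_connected_continuous_image)
  show "continuous_on (SS s A Bu Bd C D) (\<lambda>z. snd z ** matrix_inv (fst z))"
    by (rule cont_inv_mult) (auto simp: SS_def pos_def_det)
  show "path_connected (SS s A Bu Bd C D)"
    by (rule convex_imp_path_connected[OF convex_SS])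
qed

theorem lemma4:
  fixes A :: "real^'n::finite^'n" and Bu :: "real^'m::finite^'n" and Bd :: "real^'p::finite^'n"
    and C :: "real^'n^'p" and D :: "real^'p^'p"
  shows "path_connected (passivity_region A Bu Bd C D)
       \<and> path_connected (strict_passivity_region A Bu Bd C D)"
  unfolding passivity_region_def strict_passivity_region_def L_s_gen L_ns_gen
  using main_gen by blast


end
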